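(* Let $J_0$ be a two-sided $p$-periodic Jacobi matrix with discriminant $\Delta_{J_0}$ and isospectral torus $\mathcal{T}_{J_0}$. Let $J$ be a two-sided (not a priori periodic) Jacobi matrix. Then $\Delta_{J_0}(J)=S^p+S^{-p}$ if and only if $J\in\mathcal{T}_{J_0}$, where $S$ is the right shift on $\ell^2(\mathbb{Z})$.
   Context: A two-sided Jacobi matrix is the bounded tridiagonal operator on $\ell^2(\mathbb{Z})$ with $J_{nn}=b_n\in\mathbb{R}$, $J_{n,n+1}=J_{n+1,n}=a_n>0$ ($\{a_n,b_n\}$ bounded). $J_0$ is $p$-periodic if its parameters are $p$-periodic. Its discriminant is the polynomial $\Delta_{J_0}(x)=\mathrm{Tr}(\Lambda_p(x)\cdots\Lambda_1(x))$, $\Lambda_n(x)=\frac1{a^{(0)}_n}\begin{pmatrix}x-b^{(0)}_n&-1\\(a^{(0)}_n)^2&0\end{pmatrix}$, of degree $p$; $\Delta_{J_0}(J)$ is this polynomial applied to the operator $J$. The isospectral torus $\mathcal{T}_{J_0}$ is the set of two-sided $p$-periodic Jacobi matrices whose discriminant equals $\Delta_{J_0}$ (equivalently, with the same spectrum as $J_0$). The right shift is $(Su)_n=u_{n-1}$. *)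

theory Defs
  imports "HOL-Analysis.Analysis" "HOL-Computational_Algebra.Polynomial"
begin

text \<open>A two-sided Jacobi matrix is given by its parameters a, b :: int \<Rightarrow> real:
  diagonal entries b n, off-diagonal entries J(n,n+1) = J(n+1,n) = a n.\<close>

definition jacobi_params :: "(int \<Rightarrow> real) \<Rightarrow> (int \<Rightarrow> real) \<Rightarrow> bool" where
  "jacobi_params a b \<longleftrightarrow> (\<forall>n. a n > 0) \<and> bounded (range a) \<and> bounded (range b)"

definition periodic_params :: "nat \<Rightarrow> (int \<Rightarrow> real) \<Rightarrow> (int \<Rightarrow> real) \<Rightarrow> bool" where
  "periodic_params p a b \<longleftrightarrow> p \<ge> 1 \<and> (\<forall>n. a (n + int p) = a n \<and> b (n + int p) = b n)"

definition jacobi_op :: "(int \<Rightarrow> real) \<Rightarrow> (int \<Rightarrow> real) \<Rightarrow> (int \<Rightarrow> real) \<Rightarrow> (int \<Rightarrow> real)" where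
  "jacobi_op a b u = (\<lambda>n. a (n - 1) * u (n - 1) + b n * u n + a n * u (n + 1))"

definition shift_right :: "(int \<Rightarrow> real) \<Rightarrow> (int \<Rightarrow> real)" where
  "shift_right u = (\<lambda>n. u (n - 1))"

definition shift_left :: "(int \<Rightarrow> real) \<Rightarrow> (int \<Rightarrow> real)" where
  "shift_left u = (\<lambda>n. u (n + 1))"

definition l2_seq :: "(int \<Rightarrow> real) \<Rightarrow> bool" where
  "l2_seq u \<longleftrightarrow> (\<lambda>n. (u n)\<^sup>2) summable_on UNIV"

definition poly_op :: "real poly \<Rightarrow> (('i \<Rightarrow> real) \<Rightarrow> ('i \<Rightarrow> real)) \<Rightarrow> ('i \<Rightarrow> real) \<Rightarrow> ('i \<Rightarrow> real)" where
  "poly_op P T u = (\<lambda>n. \<Sum>i\<le>degree P. coeff P i * (T ^^ i) u n)"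

text \<open>2x2 matrices of polynomials (indices 0,1).\<close>
type_synonym pmat2 = "nat \<Rightarrow> nat \<Rightarrow> real poly"

definition m2mult :: "pmat2 \<Rightarrow> pmat2 \<Rightarrow> pmat2" where
  "m2mult A B = (\<lambda>i j. \<Sum>k<2. A i k * B k j)"

definition m2id :: pmat2 where
  "m2id = (\<lambda>i j. if i = j then 1 else 0)"

definition transfer :: "(int \<Rightarrow> real) \<Rightarrow> (int \<Rightarrow> real) \<Rightarrow> int \<Rightarrow> pmat2" where
  "transfer a b n = (\<lambda>i j. smult (1 / a n)
      (if i = 0 \<and> j = 0 then [:- b n, 1:]
       else if i = 0 \<and> j = 1 then [:-1:]
       else if i = 1 \<and> j = 0 then [:(a n)\<^sup>2:]
       else 0))"

fun transfer_prod :: "(int \<Rightarrow> real) \<Rightarrow> (int \<Rightarrow> real) \<Rightarrow> nat \<Rightarrow> pmat2" where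
  "transfer_prod a b 0 = m2id"
| "transfer_prod a b (Suc k) = m2mult (transfer a b (int (Suc k))) (transfer_prod a b k)"

definition discriminant :: "nat \<Rightarrow> (int \<Rightarrow> real) \<Rightarrow> (int \<Rightarrow> real) \<Rightarrow> real poly" where
  "discriminant p a b = transfer_prod a b p 0 0 + transfer_prod a b p 1 1"

definition iso_torus :: "nat \<Rightarrow> (int \<Rightarrow> real) \<Rightarrow> (int \<Rightarrow> real) \<Rightarrow> ((int \<Rightarrow> real) \<times> (int \<Rightarrow> real)) set" where
  "iso_torus p a0 b0 = {(a, b). jacobi_params a b \<and> periodic_params p a b
      \<and> discriminant p a b = discriminant p a0 b0}"

end

theory Submission
  imports Defs
begin

abbreviation J where "J a b \<equiv> jacobi_op a b"

lemma J_app: "J a b u n = a (n-1) * u (n-1) + b n * u n + a n * u (n+1)"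
  by (simp add: jacobi_op_def)

lemma shift_right_pow: "(shift_right ^^ p) u n = u (n - int p)"
  by (induction p arbitrary: n) (auto simp: shift_right_def algebra_simps)

lemma shift_left_pow: "(shift_left ^^ p) u n = u (n + int p)"
  by (induction p arbitrary: n) (auto simp: shift_left_def algebra_simps)

lemma l2_finite_support:
  assumes "finite S" "\<And>n. n \<notin> S \<Longrightarrow> u n = 0"
  shows "l2_seq u"
proof -
  have "(\<lambda>n. (u n)\<^sup>2) summable_on S" using assms(1) by simp
  moreover have "((\<lambda>n. (u n)\<^sup>2) summable_on S) = ((\<lambda>n. (u n)\<^sup>2) summable_on UNIV)"
    by (rule summable_on_cong_neutral) (auto simp: assms(2))
  ultimately show ?thesis unfolding l2_seq_def by simp
qed

definition Jp where "Jp a b i u n = (jacobi_op a b ^^ i) u n"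

lemma Jp_fun: "Jp a b i u = (J a b ^^ i) u"
  by (rule ext) (simp add: Jp_def)

lemma Jp_0[simp]: "Jp a b 0 u n = u n"
  by (simp add: Jp_def)

lemma Jp_Suc: "Jp a b (Suc i) u n = a (n-1) * Jp a b i u (n-1) + b n * Jp a b i u n + a n * Jp a b i u (n+1)"
  unfolding Jp_def by (simp only: funpow.simps comp_def J_app)

lemma Jp_Suc_right: "Jp a b (Suc i) u n = Jp a b i (J a b u) n"
  unfolding Jp_def by (simp only: funpow_Suc_right comp_def)

lemma J_local:
  assumes "\<And>k. \<bar>k - n\<bar> \<le> int i \<Longrightarrow> v k = w k"
  shows "Jp a b i v n = Jp a b i w n"
  using assms
proof (induction i arbitrary: n)
  case 0 then show ?case by simp
next
  case (Suc i)
  have e1: "Jp a b i v (n-1) = Jp a b i w (n-1)"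
    by (rule Suc.IH) (use Suc.prems in auto)
  have e2: "Jp a b i v n = Jp a b i w n"
    by (rule Suc.IH) (use Suc.prems in auto)
  have e3: "Jp a b i v (n+1) = Jp a b i w (n+1)"
    by (rule Suc.IH) (use Suc.prems in auto)
  show ?case by (simp only: Jp_Suc e1 e2 e3)
qed

lemma J_lin:
  "Jp a b i (\<lambda>m. \<Sum>j\<in>A. c j * f j m) n = (\<Sum>j\<in>A. c j * Jp a b i (f j) n)"
proof (induction i arbitrary: n)
  case 0 then show ?case by simp
next
  case (Suc i)
  show ?case
    by (simp add: Jp_Suc Suc algebra_simps sum.distrib sum_distrib_left)
qed

lemma J_hom:
  "Jp a b i (\<lambda>m. c * v m) n = c * Jp a b i v n"
  using J_lin[where A="{()}" and c="\<lambda>_. c" and f="\<lambda>_. v"] by simp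

lemma J_eigen:
  assumes "\<And>k. \<bar>k - n\<bar> < int i \<Longrightarrow> J a b u k = x * u k"
  shows "Jp a b i u n = x ^ i * u n"
  using assms
proof (induction i)
  case 0 then show ?case by simp
next
  case (Suc i)
  have "Jp a b (Suc i) u n = Jp a b i (J a b u) n"
    by (simp add: Jp_Suc_right)
  also have "\<dots> = Jp a b i (\<lambda>m. x * u m) n"
    by (rule J_local) (use Suc.prems in auto)
  also have "\<dots> = x * Jp a b i u n" by (simp add: J_hom)
  also have "Jp a b i u n = x ^ i * u n"
    by (rule Suc.IH) (use Suc.prems in auto)
  finally show ?case by simp
qed

lemma poly_op_Jp: "poly_op P (J a b) u n = (\<Sum>i\<le>degree P. coeff P i * Jp a b i u n)"
  by (simp add: poly_op_def Jp_def)

lemma poly_op_N: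
  assumes "degree P \<le> N"
  shows "poly_op P T u n = (\<Sum>i\<le>N. coeff P i * (T ^^ i) u n)"
  unfolding poly_op_def
  by (rule sum.mono_neutral_left) (use assms in \<open>auto simp: coeff_eq_0\<close>)

lemma poly_op_local:
  assumes "degree P \<le> N" "\<And>k. \<bar>k - n\<bar> \<le> int N \<Longrightarrow> v k = w k"
  shows "poly_op P (J a b) v n = poly_op P (J a b) w n"
  unfolding poly_op_Jp
  by (rule sum.cong[OF refl], rule arg_cong[where f="\<lambda>t. _ * t"], rule J_local)
     (use assms in auto)

lemma poly_op_lin:
  "poly_op P (J a b) (\<lambda>m. \<Sum>j\<in>A. c j * f j m) n = (\<Sum>j\<in>A. c j * poly_op P (J a b) (f j) n)"
  unfolding poly_op_Jp J_lin
  by (simp add: sum_distrib_left sum.swap[of _ A] algebra_simps)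

lemma poly_op_eigen:
  assumes "degree P \<le> N" "\<And>k. \<bar>k - n\<bar> < int N \<Longrightarrow> J a b u k = x * u k"
  shows "poly_op P (J a b) u n = poly P x * u n"
proof -
  have "poly_op P (J a b) u n = (\<Sum>i\<le>degree P. coeff P i * (x ^ i * u n))"
    unfolding poly_op_Jp
    by (rule sum.cong[OF refl], subst J_eigen[where x=x]) (use assms in auto)
  also have "\<dots> = poly P x * u n"
    by (simp add: poly_altdef sum_distrib_left algebra_simps)
  finally show ?thesis .
qed

lemma poly_op_comm:
  "poly_op P (J a b) (J a b u) n = J a b (poly_op P (J a b) u) n"
proof -
  have "J a b (poly_op P (J a b) u) n = Jp a b 1 (\<lambda>n. \<Sum>i\<le>degree P. coeff P i * Jp a b i u n) n"
    by (simp add: poly_op_def Jp_def)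
  also have "\<dots> = (\<Sum>i\<le>degree P. coeff P i * Jp a b 1 (Jp a b i u) n)"
    by (rule J_lin)
  also have "\<dots> = (\<Sum>i\<le>degree P. coeff P i * Jp a b i (J a b u) n)"
    by (rule sum.cong[OF refl]) (simp add: Jp_fun funpow_swap1)
  finally show ?thesis
    by (simp add: poly_op_Jp)
qed


section \<open>Real 2x2 matrices\<close>

type_synonym rmat = "nat \<Rightarrow> nat \<Rightarrow> real"

definition rmult :: "rmat \<Rightarrow> rmat \<Rightarrow> rmat" where
  "rmult A B = (\<lambda>i j. \<Sum>k<2. A i k * B k j)"

definition rid :: rmat where "rid = (\<lambda>i j. if i = j then 1 else 0)"

definition mv :: "rmat \<Rightarrow> (nat \<Rightarrow> real) \<Rightarrow> (nat \<Rightarrow> real)" where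
  "mv A w = (\<lambda>i. \<Sum>k<2. A i k * w k)"

definition tr :: "rmat \<Rightarrow> real" where "tr A = A 0 0 + A 1 1"

definition dt :: "rmat \<Rightarrow> real" where "dt A = A 0 0 * A 1 1 - A 0 1 * A 1 0"

definition Lm :: "(int \<Rightarrow> real) \<Rightarrow> (int \<Rightarrow> real) \<Rightarrow> int \<Rightarrow> real \<Rightarrow> rmat" where
  "Lm a b n x = (\<lambda>i j. (1 / a n) *
      (if i = 0 \<and> j = 0 then x - b n
       else if i = 0 \<and> j = 1 then -1
       else if i = 1 \<and> j = 0 then (a n)\<^sup>2
       else 0))"

fun prodL :: "(int \<Rightarrow> real) \<Rightarrow> (int \<Rightarrow> real) \<Rightarrow> int \<Rightarrow> real \<Rightarrow> nat \<Rightarrow> rmat" where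
  "prodL a b s x 0 = rid"
| "prodL a b s x (Suc j) = rmult (Lm a b (s + int (Suc j)) x) (prodL a b s x j)"

lemma sum2: "(\<Sum>k<(2::nat). f k) = f 0 + (f 1 :: real)"
  by (simp add: numeral_2_eq_2)

lemma rmult_assoc: "rmult (rmult A B) C = rmult A (rmult B C)"
  by (rule ext)+ (simp add: rmult_def sum2 algebra_simps)

lemma mv_rmult: "mv (rmult A B) w = mv A (mv B w)"
  by (rule ext) (simp add: rmult_def mv_def sum2 algebra_simps)

lemma tr_comm: "tr (rmult A B) = tr (rmult B A)"
  by (simp add: rmult_def tr_def sum2 algebra_simps)

lemma dt_mult: "dt (rmult A B) = dt A * dt B"
  by (simp add: rmult_def dt_def sum2 algebra_simps)

lemma dt_Lm: "a n \<noteq> 0 \<Longrightarrow> dt (Lm a b n x) = 1"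
  by (simp add: Lm_def dt_def power2_eq_square)

lemma dt_prodL: "(\<forall>m. a m \<noteq> 0) \<Longrightarrow> dt (prodL a b s x j) = 1"
proof (induction j)
  case 0 then show ?case by (simp add: dt_def rid_def)
next
  case (Suc j)
  have "dt (prodL a b s x (Suc j)) = dt (Lm a b (s + int (Suc j)) x) * dt (prodL a b s x j)"
    by (simp only: prodL.simps dt_mult)
  then show ?case using Suc by (simp add: dt_Lm)
qed

lemma CH: "i < 2 \<Longrightarrow> mv M (mv M w) i = tr M * mv M w i - dt M * w i"
  by (auto simp: mv_def tr_def dt_def sum2 algebra_simps less_2_cases_iff)

lemma poly_transfer: "poly (transfer a b n i j) x = Lm a b n x i j"
  by (simp add: transfer_def Lm_def)

lemma poly_transfer_prod: "poly (transfer_prod a b k i j) x = prodL a b 0 x k i j"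
proof (induction k arbitrary: i j)
  case 0 then show ?case by (simp add: m2id_def rid_def)
next
  case (Suc k)
  show ?case
    by (simp add: m2mult_def rmult_def poly_sum poly_transfer Suc)
qed

lemma poly_disc: "poly (discriminant p a b) x = tr (prodL a b 0 x p)"
  by (simp add: discriminant_def poly_transfer_prod tr_def)

lemma prodL_split: "prodL a b s x (Suc j) = rmult (prodL a b (s+1) x j) (Lm a b (s+1) x)"
proof (induction j)
  case 0 then show ?case
    by (rule ext)+ (simp add: rmult_def rid_def sum2 Lm_def)
next
  case (Suc j)
  have idx: "s + int (Suc (Suc j)) = s + 1 + int (Suc j)" by simp
  have "prodL a b s x (Suc (Suc j)) = rmult (Lm a b (s + int (Suc (Suc j))) x) (prodL a b s x (Suc j))"
    by (rule prodL.simps(2))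
  also have "\<dots> = rmult (Lm a b (s + 1 + int (Suc j)) x) (rmult (prodL a b (s+1) x j) (Lm a b (s+1) x))"
    by (simp only: idx Suc.IH)
  also have "\<dots> = rmult (prodL a b (s+1) x (Suc j)) (Lm a b (s+1) x)"
    by (simp only: prodL.simps rmult_assoc)
  finally show ?case .
qed

lemma prodL_period:
  assumes "\<forall>m. a (m + int p) = a m \<and> b (m + int p) = b m"
  shows "prodL a b (s + int p) x j = prodL a b s x j"
proof (induction j)
  case 0 then show ?case by simp
next
  case (Suc j)
  have e: "s + int p + int (Suc j) = s + int (Suc j) + int p" by simp
  have ha: "a (s + int (Suc j) + int p) = a (s + int (Suc j))" 
    and hb: "b (s + int (Suc j) + int p) = b (s + int (Suc j))"
    using assms by auto
  have "Lm a b (s + int p + int (Suc j)) x = Lm a b (s + int (Suc j)) x"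
    unfolding e Lm_def ha hb ..
  then show ?case by (simp add: Suc)
qed

lemma tr_shift:
  assumes "\<forall>m. a (m + int p) = a m \<and> b (m + int p) = b m" "p \<ge> 1"
  shows "tr (prodL a b (s+1) x p) = tr (prodL a b s x p)"
proof -
  obtain q where q: "p = Suc q" using assms(2) by (cases p) auto
  have ha: "a (s + 1 + int p) = a (s + 1)" 
    and hb: "b (s + 1 + int p) = b (s + 1)"
    using assms by auto
  have L: "Lm a b (s + 1 + int p) x = Lm a b (s+1) x"
    unfolding Lm_def ha hb ..
  have "tr (prodL a b s x p) = tr (rmult (prodL a b (s+1) x q) (Lm a b (s+1) x))"
    by (simp only: q prodL_split)
  also have "\<dots> = tr (rmult (Lm a b (s+1) x) (prodL a b (s+1) x q))"
    by (rule tr_comm)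
  also have "\<dots> = tr (prodL a b (s+1) x p)"
    using L by (simp add: q)
  finally show ?thesis by simp
qed

lemma tr_inv:
  assumes "\<forall>m. a (m + int p) = a m \<and> b (m + int p) = b m" "p \<ge> 1"
  shows "tr (prodL a b s x p) = tr (prodL a b 0 x p)"
proof (induction s rule: int_induct[where k=0])
  case base then show ?case by simp
next
  case (step1 i) then show ?case using tr_shift[OF assms, of i x] by simp
next
  case (step2 i) then show ?case using tr_shift[OF assms, of "i - 1" x] by simp
qed

definition W :: "(int \<Rightarrow> real) \<Rightarrow> (int \<Rightarrow> real) \<Rightarrow> int \<Rightarrow> nat \<Rightarrow> real" where
  "W a u m = (\<lambda>i. if i = 0 then u (m+1) else if i = 1 then a m * u m else 0)"

lemma W_step:
  assumes "a (m+1) \<noteq> 0" "J a b u (m+1) = x * u (m+1)"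
  shows "W a u (m+1) = mv (Lm a b (m+1) x) (W a u m)"
proof -
  have e: "a (m+1) * u (m+2) = x * u (m+1) - b (m+1) * u (m+1) - a m * u m"
    using assms(2) by (simp add: J_app algebra_simps)
  have e2: "u (m+2) = (x * u (m+1) - b (m+1) * u (m+1) - a m * u m) / a (m+1)"
    using e assms(1) by (simp add: field_simps)
  show ?thesis
    by (rule ext) (simp add: W_def mv_def Lm_def sum2 e2 field_simps assms(1) power2_eq_square)
qed

lemma W_steps:
  assumes "\<forall>m. a m \<noteq> 0" "\<And>k. s < k \<Longrightarrow> k \<le> s + int j \<Longrightarrow> J a b u k = x * u k"
  shows "W a u (s + int j) = mv (prodL a b s x j) (W a u s)"
  using assms(2)
proof (induction j)
  case 0 show ?case
    by (rule ext) (simp add: mv_def rid_def sum2 W_def)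
next
  case (Suc j)
  have "W a u (s + int (Suc j)) = W a u ((s + int j) + 1)" by (simp add: algebra_simps)
  also have "\<dots> = mv (Lm a b (s + int j + 1) x) (W a u (s + int j))"
    by (rule W_step) (use assms(1) Suc.prems in auto)
  also have "\<dots> = mv (Lm a b (s + int j + 1) x) (mv (prodL a b s x j) (W a u s))"
    using Suc by simp
  also have "\<dots> = mv (prodL a b s x (Suc j)) (W a u s)"
    by (simp add: mv_rmult algebra_simps)
  finally show ?case .
qed

lemma magic_step:
  assumes pos: "\<forall>m. a m > 0" and per: "\<forall>m. a (m + int p) = a m \<and> b (m + int p) = b m"
    and p1: "p \<ge> 1"
    and eig: "\<And>k. n - int p < k \<Longrightarrow> k \<le> n + int p \<Longrightarrow> J a b u k = x * u k"
  shows "u (n + int p) + u (n - int p) = poly (discriminant p a b) x * u n"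
proof -
  have nz: "\<forall>m. a m \<noteq> 0" using pos by (metis less_irrefl)
  define M where "M = prodL a b (n - int p) x p"
  have W1: "W a u n = mv M (W a u (n - int p))"
    using W_steps[OF nz, where s="n - int p" and j=p and u=u and x=x] eig unfolding M_def by auto
  have W2: "W a u (n + int p) = mv (prodL a b n x p) (W a u n)"
    using W_steps[OF nz, where s=n and j=p and u=u and x=x] eig by auto
  have "prodL a b n x p = prodL a b (n - int p + int p) x p" by simp
  also have "\<dots> = M" unfolding M_def by (rule prodL_period[OF per])
  finally have W2': "W a u (n + int p) = mv M (mv M (W a u (n - int p)))"
    using W2 W1 by simp
  have "W a u (n + int p) 1 = tr M * W a u n 1 - dt M * W a u (n - int p) 1"
    using W2' W1 CH[of 1 M "W a u (n - int p)"] by simp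
  moreover have "dt M = 1" unfolding M_def by (rule dt_prodL[OF nz])
  moreover have "tr M = poly (discriminant p a b) x"
    unfolding M_def poly_disc by (rule tr_inv[OF per p1])
  moreover have "a (n + int p) = a n" using per by auto
  moreover have "a (n - int p) = a n" using per[rule_format, of "n - int p"] by auto
  ultimately have "a n * u (n + int p) = poly (discriminant p a b) x * (a n * u n) - a n * u (n - int p)"
    by (simp add: W_def)
  then have "a n * (u (n + int p) + u (n - int p)) = a n * (poly (discriminant p a b) x * u n)"
    by (simp add: algebra_simps)
  then show ?thesis using nz by simp
qed


lemma degree_transfer: "degree (transfer a b n i j) \<le> 1"
  by (simp add: transfer_def)

lemma degree_transfer_prod: "degree (transfer_prod a b k i j) \<le> k"
proof (induction k arbitrary: i j)
  case 0 then show ?case by (simp add: m2id_def)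
next
  case (Suc k)
  have "degree (\<Sum>l<2. transfer a b (int (Suc k)) i l * transfer_prod a b k l j) \<le> Suc k"
  proof (rule degree_sum_le)
    fix l
    have "degree (transfer a b (int (Suc k)) i l * transfer_prod a b k l j)
        \<le> degree (transfer a b (int (Suc k)) i l) + degree (transfer_prod a b k l j)"
      by (rule degree_mult_le)
    also have "\<dots> \<le> 1 + k" using degree_transfer Suc.IH by (intro add_mono)
    finally show "degree (transfer a b (int (Suc k)) i l * transfer_prod a b k l j) \<le> Suc k"
      by simp
  qed simp
  then show ?case by (simp add: m2mult_def)
qed

lemma degree_disc: "degree (discriminant p a b) \<le> p"
  unfolding discriminant_def
  by (rule degree_add_le; rule degree_transfer_prod)

section \<open>Solutions of the eigenvalue equation\<close>

fun solp :: "(int \<Rightarrow> real) \<Rightarrow> (int \<Rightarrow> real) \<Rightarrow> int \<Rightarrow> real poly \<Rightarrow> real poly \<Rightarrow> nat \<Rightarrow> real poly" where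
  "solp a b s c0 c1 0 = c0"
| "solp a b s c0 c1 (Suc 0) = c1"
| "solp a b s c0 c1 (Suc (Suc j)) = smult (1 / a (s + int j + 1))
     ([:- b (s + int j + 1), 1:] * solp a b s c0 c1 (Suc j) - smult (a (s + int j)) (solp a b s c0 c1 j))"

definition solx :: "(int \<Rightarrow> real) \<Rightarrow> (int \<Rightarrow> real) \<Rightarrow> int \<Rightarrow> real poly \<Rightarrow> real poly \<Rightarrow> real \<Rightarrow> int \<Rightarrow> real" where
  "solx a b s c0 c1 x m = (if s \<le> m then poly (solp a b s c0 c1 (nat (m - s))) x else 0)"

lemma solx_at: "solx a b s c0 c1 x (s + int j) = poly (solp a b s c0 c1 j) x"
  by (simp add: solx_def)

lemma solx_eig:
  assumes "\<forall>m. a m > 0" "s < k"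
  shows "J a b (solx a b s c0 c1 x) k = x * solx a b s c0 c1 x k"
proof -
  obtain j where kj: "k = s + int j + 1" using assms(2)
  proof -
    have "k - s - 1 \<ge> 0" using assms(2) by simp
    then have "k = s + int (nat (k - s - 1)) + 1" by simp
    then show ?thesis using that by blast
  qed
  have i0: "k - 1 = s + int j" and i1: "k = s + int (Suc j)" and i2: "k + 1 = s + int (Suc (Suc j))"
    using kj by auto
  have e0: "solx a b s c0 c1 x (k - 1) = poly (solp a b s c0 c1 j) x"
    unfolding i0 by (rule solx_at)
  have e1: "solx a b s c0 c1 x k = poly (solp a b s c0 c1 (Suc j)) x"
    unfolding i1 by (rule solx_at)
  have e2: "solx a b s c0 c1 x (k + 1) = poly (solp a b s c0 c1 (Suc (Suc j))) x"
    unfolding i2 by (rule solx_at)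
  have pos: "a k > 0" using assms(1) by auto
  show ?thesis
    unfolding J_app e0 e1 e2 using pos
    by (simp add: kj field_simps)
qed

lemma solp_deg: "solp a b s 0 1 (Suc j) \<noteq> 0 \<and> degree (solp a b s 0 1 (Suc j)) = j"
  if "\<forall>m. a m > 0"
proof (induction j rule: less_induct)
  case (less j)
  show ?case
  proof (cases j)
    case 0 then show ?thesis by simp
  next
    case (Suc i)
    have IH: "solp a b s 0 1 (Suc i) \<noteq> 0 \<and> degree (solp a b s 0 1 (Suc i)) = i"
      using less Suc by auto
    have dlow: "degree (solp a b s 0 1 i) < Suc i"
    proof (cases i)
      case 0 then show ?thesis by simp
    next
      case (Suc i')
      then show ?thesis using less[of i'] \<open>j = Suc i\<close> by auto
    qed
    define q where "q = [:- b (s + int i + 1), 1:] * solp a b s 0 1 (Suc i)"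
    have dq: "degree q = Suc i" unfolding q_def using IH
      by (subst degree_mult_eq) auto
    have "degree (smult (a (s + int i)) (solp a b s 0 1 i)) < degree q"
      using dlow dq by simp
    then have d: "degree (q - smult (a (s + int i)) (solp a b s 0 1 i)) = Suc i"
      using dq by (metis degree_add_eq_left degree_minus diff_conv_add_uminus)
    have an: "1 / a (s + int i + 1) \<noteq> 0" using that by (metis divide_eq_0_iff less_irrefl one_neq_zero)
    have eqs: "solp a b s 0 1 (Suc j) = smult (1 / a (s + int i + 1)) (q - smult (a (s + int i)) (solp a b s 0 1 i))"
      by (simp add: Suc q_def)
    have dd: "degree (solp a b s 0 1 (Suc j)) = Suc i"
      unfolding eqs degree_smult_eq using d an by simp
    then have "solp a b s 0 1 (Suc j) \<noteq> 0" by (metis degree_0 nat.distinct(1))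
    then show ?thesis using dd Suc by auto
  qed
qed

lemma lin_indep:
  fixes P :: "nat \<Rightarrow> real poly"
  assumes "\<And>j. 1 \<le> j \<Longrightarrow> degree (P j) = j - 1 \<and> P j \<noteq> 0" "P 0 = 0"
  shows "(\<Sum>j\<le>N. smult (c j) (P j)) = 0 \<Longrightarrow> 1 \<le> j \<Longrightarrow> j \<le> N \<Longrightarrow> c j = 0"
proof (induction N arbitrary: j)
  case 0 then show ?case by simp
next
  case (Suc N)
  have low: "coeff (\<Sum>j\<le>N. smult (c j) (P j)) N = 0"
    unfolding coeff_sum
  proof (rule sum.neutral, rule ballI)
    fix i assume "i \<in> {..N}"
    show "coeff (smult (c i) (P i)) N = 0"
    proof (cases "i = 0")
      case True then show ?thesis using assms(2) by simp
    next
      case False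
      then have "degree (P i) < N" using assms(1)[of i] \<open>i \<in> {..N}\<close> by auto
      then show ?thesis by (simp add: coeff_eq_0)
    qed
  qed
  have top: "coeff (P (Suc N)) N \<noteq> 0"
    using assms(1)[of "Suc N"] by (metis diff_Suc_1 le_add1 leading_coeff_0_iff plus_1_eq_Suc)
  have "coeff (\<Sum>j\<le>Suc N. smult (c j) (P j)) N = 0" using Suc.prems by simp
  then have "c (Suc N) * coeff (P (Suc N)) N = 0" using low by simp
  then have cN: "c (Suc N) = 0" using top by simp
  then have rest: "(\<Sum>j\<le>N. smult (c j) (P j)) = 0" using Suc.prems by simp
  show ?case
  proof (cases "j = Suc N")
    case True then show ?thesis using cN by simp
  next
    case False then show ?thesis using Suc.IH[OF rest] Suc.prems by auto
  qed
qed


section \<open>The magic formula\<close>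

lemma delta_sum:
  assumes "\<bar>m - n\<bar> \<le> int p"
  shows "(\<Sum>j\<le>2*p. v (n - int p + int j) * (if m = n - int p + int j then 1 else 0)) = (v m :: real)"
proof -
  define k where "k = nat (m - n + int p)"
  have mk: "m = n - int p + int k" using assms unfolding k_def by simp
  have kin: "k \<in> {..2*p}" using assms unfolding k_def by auto
  have "(\<Sum>j\<le>2*p. v (n - int p + int j) * (if m = n - int p + int j then 1 else 0))
      = (\<Sum>j\<le>2*p. if j = k then v (n - int p + int j) else 0)"
    by (rule sum.cong[OF refl]) (auto simp: mk)
  also have "\<dots> = v m" using kin by (simp add: mk)
  finally show ?thesis .
qed

lemma magic:
  assumes pos: "\<forall>m. a m > 0" and per: "\<forall>m. a (m + int p) = a m \<and> b (m + int p) = b m"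
    and p1: "p \<ge> 1"
  shows "poly_op (discriminant p a b) (J a b) u n = u (n - int p) + u (n + int p)"
proof -
  define \<Delta> where "\<Delta> = discriminant p a b"
  have deg: "degree \<Delta> \<le> p" unfolding \<Delta>_def by (rule degree_disc)
  define D where "D j = (\<lambda>m. if m = n - int p + int j then 1 else (0::real))" for j :: nat
  define \<beta> where "\<beta> j = poly_op \<Delta> (J a b) (D j) n - D j (n - int p) - D j (n + int p)" for j
  have key: "poly_op \<Delta> (J a b) v n - v (n - int p) - v (n + int p)
      = (\<Sum>j\<le>2*p. v (n - int p + int j) * \<beta> j)" for v
  proof -
    define v' where "v' = (\<lambda>m. \<Sum>j\<le>2*p. v (n - int p + int j) * D j m)"
    have agree: "v' m = v m" if "\<bar>m - n\<bar> \<le> int p" for m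
      unfolding v'_def D_def using delta_sum[OF that] by simp
    have "poly_op \<Delta> (J a b) v n = poly_op \<Delta> (J a b) v' n"
      by (rule poly_op_local[OF deg]) (simp add: agree)
    also have "\<dots> = (\<Sum>j\<le>2*p. v (n - int p + int j) * poly_op \<Delta> (J a b) (D j) n)"
      unfolding v'_def by (rule poly_op_lin)
    finally have 1: "poly_op \<Delta> (J a b) v n = (\<Sum>j\<le>2*p. v (n - int p + int j) * poly_op \<Delta> (J a b) (D j) n)" .
    have 2: "v (n - int p) = (\<Sum>j\<le>2*p. v (n - int p + int j) * D j (n - int p))"
      using agree[of "n - int p"] unfolding v'_def by simp
    have 3: "v (n + int p) = (\<Sum>j\<le>2*p. v (n - int p + int j) * D j (n + int p))"
      using agree[of "n + int p"] unfolding v'_def by simp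
    show ?thesis unfolding 1 \<beta>_def
      by (subst 2, subst 3) (simp add: sum_subtractf right_diff_distrib)
  qed
  have zero_sol: "(\<Sum>j\<le>2*p. solx a b (n - int p) c0 c1 x (n - int p + int j) * \<beta> j) = 0" for c0 c1 x
  proof -
    let ?v = "solx a b (n - int p) c0 c1 x"
    have "poly_op \<Delta> (J a b) ?v n = poly \<Delta> x * ?v n"
      by (rule poly_op_eigen[OF deg]) (rule solx_eig[OF pos], simp)
    moreover have "?v (n + int p) + ?v (n - int p) = poly \<Delta> x * ?v n"
      unfolding \<Delta>_def by (rule magic_step[OF pos per p1]) (rule solx_eig[OF pos], simp)
    ultimately show ?thesis using key[of ?v] by simp
  qed
  define P where "P = solp a b (n - int p) 0 1"
  have "\<forall>x. poly (\<Sum>j\<le>2*p. smult (\<beta> j) (P j)) x = 0"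
  proof
    fix x
    have "poly (\<Sum>j\<le>2*p. smult (\<beta> j) (P j)) x
        = (\<Sum>j\<le>2*p. solx a b (n - int p) 0 1 x (n - int p + int j) * \<beta> j)"
      by (simp add: poly_sum P_def solx_at mult.commute)
    then show "poly (\<Sum>j\<le>2*p. smult (\<beta> j) (P j)) x = 0" using zero_sol by simp
  qed
  then have psum: "(\<Sum>j\<le>2*p. smult (\<beta> j) (P j)) = 0" by (simp add: poly_all_0_iff_0)
  have Pdeg: "degree (P j) = j - 1 \<and> P j \<noteq> 0" if j1: "1 \<le> j" for j
  proof -
    obtain i where "j = Suc i" using j1 by (cases j) auto
    then show ?thesis using solp_deg[OF pos, where s="n - int p" and j=i and b=b] unfolding P_def by simp
  qed
  have bz: "\<beta> j = 0" if "1 \<le> j" "j \<le> 2*p" for j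
    using lin_indep[of P, OF Pdeg _ psum that] by (simp add: P_def)
  have "(\<Sum>j\<le>2*p. solx a b (n - int p) 1 0 0 (n - int p + int j) * \<beta> j)
      = (\<Sum>j\<le>2*p. if j = 0 then \<beta> 0 else 0)"
    by (rule sum.cong[OF refl]) (auto simp: solx_at bz)
  then have b0: "\<beta> 0 = 0" using zero_sol[of 1 0 0] by simp
  have "\<beta> j = 0" if "j \<le> 2*p" for j
    using b0 bz that by (cases "j = 0") auto
  then have "poly_op \<Delta> (J a b) u n - u (n - int p) - u (n + int p) = 0"
    unfolding key by simp
  then show ?thesis unfolding \<Delta>_def by simp
qed


lemma poly_op_diff:
  "poly_op (P - Q) T u n = poly_op P T u n - poly_op Q T u n"
proof -
  define N where "N = max (degree P) (degree Q)"
  have dPQ: "degree (P - Q) \<le> N" unfolding N_def by (rule degree_diff_le_max)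
  have dP: "degree P \<le> N" and dQ: "degree Q \<le> N" unfolding N_def by auto
  show ?thesis
    unfolding poly_op_N[OF dPQ] poly_op_N[OF dP] poly_op_N[OF dQ]
    by (simp add: N_def left_diff_distrib sum_subtractf)
qed

lemma Jp_delta:
  "(\<forall>k. \<bar>k\<bar> > int i \<longrightarrow> Jp a b i (\<lambda>m. if m = 0 then 1 else 0) k = 0) \<and>
   Jp a b i (\<lambda>m. if m = 0 then 1 else 0) (int i) = (\<Prod>j<i. a (int j))"
proof (induction i)
  case 0 then show ?case by simp
next
  case (Suc i)
  let ?d = "\<lambda>m::int. if m = 0 then 1 else (0::real)"
  have z: "Jp a b i ?d k = 0" if "\<bar>k\<bar> > int i" for k using Suc that by blast
  have A: "Jp a b (Suc i) ?d k = 0" if "\<bar>k\<bar> > int (Suc i)" for k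
    unfolding Jp_Suc using that by (simp add: z)
  have "Jp a b (Suc i) ?d (int (Suc i)) = a (int i) * Jp a b i ?d (int i)"
    unfolding Jp_Suc by (simp add: z)
  then have B: "Jp a b (Suc i) ?d (int (Suc i)) = (\<Prod>j<Suc i. a (int j))"
    using Suc by (simp add: mult.commute)
  show ?case using A B by blast
qed

theorem theorem3p1:
  fixes p :: nat and a0 b0 a b :: "int \<Rightarrow> real"
  assumes "jacobi_params a0 b0" and "periodic_params p a0 b0"
    and "jacobi_params a b"
  shows "(\<forall>u. l2_seq u \<longrightarrow>
            poly_op (discriminant p a0 b0) (jacobi_op a b) u
              = (\<lambda>n. (shift_right ^^ p) u n + (shift_left ^^ p) u n))
         \<longleftrightarrow> (a, b) \<in> iso_torus p a0 b0"
proof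
  assume H: "\<forall>u. l2_seq u \<longrightarrow>
            poly_op (discriminant p a0 b0) (jacobi_op a b) u
              = (\<lambda>n. (shift_right ^^ p) u n + (shift_left ^^ p) u n)"
  have p1: "p \<ge> 1" using assms(2) by (simp add: periodic_params_def)
  have pos: "\<forall>m. a m > 0" using assms(3) by (simp add: jacobi_params_def)
  have H': "poly_op (discriminant p a0 b0) (J a b) u n = u (n - int p) + u (n + int p)"
    if "finite S" "\<And>n. n \<notin> S \<Longrightarrow> u n = 0" for u S n
  proof -
    have "l2_seq u" by (rule l2_finite_support[OF that])
    then show ?thesis using H by (simp add: shift_right_pow shift_left_pow fun_eq_iff)
  qed
  define d where "d m = (\<lambda>k::int. if k = m then 1 else (0::real))" for m
  have Hd: "poly_op (discriminant p a0 b0) (J a b) (d m) n = d m (n - int p) + d m (n + int p)" for m n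
    by (rule H'[of "{m}"]) (auto simp: d_def)
  have HJd: "poly_op (discriminant p a0 b0) (J a b) (J a b (d m)) n
      = J a b (d m) (n - int p) + J a b (d m) (n + int p)" for m n
    by (rule H'[of "{m-1, m, m+1}"]) (auto simp: d_def J_app)
  have comm: "J a b (\<lambda>k. d m (k - int p) + d m (k + int p)) n
      = J a b (d m) (n - int p) + J a b (d m) (n + int p)" for m n
  proof -
    have "J a b (\<lambda>k. d m (k - int p) + d m (k + int p)) n
        = J a b (poly_op (discriminant p a0 b0) (J a b) (d m)) n"
    proof -
      have "poly_op (discriminant p a0 b0) (J a b) (d m) = (\<lambda>k. d m (k - int p) + d m (k + int p))"
        by (rule ext) (rule Hd)
      then show ?thesis by simp
    qed
    also have "\<dots> = poly_op (discriminant p a0 b0) (J a b) (J a b (d m)) n"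
      by (rule poly_op_comm[symmetric])
    finally show ?thesis using HJd by simp
  qed
  have pa: "a (m + int p) = a m" for m
    using comm[of m "m + int p + 1"] p1 by (simp add: J_app d_def)
  have pb: "b (m + int p) = b m" for m
    using comm[of m "m + int p"] p1 by (simp add: J_app d_def)
  have per: "\<forall>m. a (m + int p) = a m \<and> b (m + int p) = b m" using pa pb by simp
  define Q where "Q = discriminant p a b - discriminant p a0 b0"
  have Qz: "poly_op Q (J a b) (d 0) n = 0" for n
    unfolding Q_def poly_op_diff using magic[OF pos per p1, of "d 0" n] Hd[of 0 n] by simp
  have "Q = 0"
  proof (rule ccontr)
    assume Qn: "Q \<noteq> 0"
    define e where "e = degree Q"
    have d0: "d 0 = (\<lambda>m. if m = 0 then 1 else 0)" by (simp add: d_def fun_eq_iff)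
    have "poly_op Q (J a b) (d 0) (int e) = (\<Sum>i\<le>e. coeff Q i * Jp a b i (d 0) (int e))"
      unfolding poly_op_Jp e_def ..
    also have "\<dots> = (\<Sum>i\<le>e. if i = e then coeff Q e * (\<Prod>j<e. a (int j)) else 0)"
    proof (rule sum.cong[OF refl])
      fix i assume "i \<in> {..e}"
      then show "coeff Q i * Jp a b i (d 0) (int e) = (if i = e then coeff Q e * (\<Prod>j<e. a (int j)) else 0)"
        using Jp_delta[of i a b] unfolding d0 by auto
    qed
    also have "\<dots> = coeff Q e * (\<Prod>j<e. a (int j))" by simp
    finally have "coeff Q e * (\<Prod>j<e. a (int j)) = 0" using Qz by simp
    moreover have "coeff Q e \<noteq> 0" using Qn unfolding e_def by simp
    moreover have "(\<Prod>j<e. a (int j)) \<noteq> 0"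
      using pos by (metis (no_types, lifting) finite_lessThan less_irrefl prod_pos)
    ultimately show False by simp
  qed
  then show "(a, b) \<in> iso_torus p a0 b0"
    using assms(3) p1 per unfolding iso_torus_def periodic_params_def Q_def by simp
next
  assume "(a, b) \<in> iso_torus p a0 b0"
  then have T: "jacobi_params a b" "periodic_params p a b"
    "discriminant p a b = discriminant p a0 b0"
    unfolding iso_torus_def by auto
  have pos: "\<forall>m. a m > 0" using T(1) by (simp add: jacobi_params_def)
  have p1: "p \<ge> 1" and per: "\<forall>m. a (m + int p) = a m \<and> b (m + int p) = b m"
    using T(2) by (auto simp: periodic_params_def)
  show "\<forall>u. l2_seq u \<longrightarrow>
            poly_op (discriminant p a0 b0) (jacobi_op a b) u
              = (\<lambda>n. (shift_right ^^ p) u n + (shift_left ^^ p) u n)"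
    using magic[OF pos per p1] T(3)[symmetric]
    by (simp add: fun_eq_iff shift_right_pow shift_left_pow)
qed

end
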